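(* Let $n_1<n_2<n_3<\cdots$ be the colossally abundant numbers listed in increasing order. Then $$\lim_{i\to\infty}\frac{\log n_{i-1}}{\log n_i}=1.$$
   Context: $\sigma(n)=\sum_{d\mid n}d$. A positive integer $n$ is colossally abundant if there exists $\varepsilon>0$ such that $\sigma(k)/k^{1+\varepsilon}\le \sigma(n)/n^{1+\varepsilon}$ for all $k\in\mathbb N$. There are infinitely many colossally abundant numbers; the first few are $2,6,12,60,120,360,2520,5040,\dots$. *)

theory Defs
  imports Complex_Main
begin

definition divisor_sigma :: "nat \<Rightarrow> nat" where
  "divisor_sigma n = (\<Sum>d\<in>{d. d dvd n}. d)"

definition colossally_abundant :: "nat \<Rightarrow> bool" where
  "colossally_abundant n \<longleftrightarrow> n > 0 \<and>
     (\<exists>\<epsilon>::real. \<epsilon> > 0 \<and>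
        (\<forall>k::nat. k > 0 \<longrightarrow>
           real (divisor_sigma k) / real k powr (1 + \<epsilon>)
             \<le> real (divisor_sigma n) / real n powr (1 + \<epsilon>)))"

end

theory Submission
  imports Defs "HOL-Computational_Algebra.Primes" "HOL-Analysis.Harmonic_Numbers" "HOL-Real_Asymp.Real_Asymp"
begin

lemma sigma_pos: "k > 0 \<Longrightarrow> divisor_sigma k \<ge> k"
  unfolding divisor_sigma_def
  by (rule member_le_sum) (auto simp: finite_divisors_nat)

lemma sigma_mult:
  assumes "coprime a b" "a > 0" "b > 0"
  shows "divisor_sigma (a * b) = divisor_sigma a * divisor_sigma b"
proof -
  let ?D = "\<lambda>n::nat. {d. d dvd n}"
  have fin: "finite (?D n)" if "n > 0" for n using that by (simp add: finite_divisors_nat)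
  have inj: "inj_on (\<lambda>(x,y). x * y) (?D a \<times> ?D b)"
  proof (rule inj_onI, clarsimp)
    fix x1 y1 x2 y2 :: nat
    assume h: "x1 dvd a" "y1 dvd b" "x2 dvd a" "y2 dvd b" "x1 * y1 = x2 * y2"
    have c1: "coprime x1 y2" using assms(1) h by (meson coprime_divisors)
    have c2: "coprime x2 y1" using assms(1) h by (meson coprime_divisors)
    have "x1 dvd x2 * y2" using h(5) by (metis dvd_triv_left)
    hence d1: "x1 dvd x2" using c1 coprime_dvd_mult_left_iff by blast
    have "x2 dvd x1 * y1" using h(5) by (metis dvd_triv_left)
    hence d2: "x2 dvd x1" using c2 coprime_dvd_mult_left_iff by blast
    have "x1 = x2" using d1 d2 by (simp add: dvd_antisym)
    moreover have "x1 > 0" using h(1) assms(2) by (metis dvd_0_left_iff gr0I)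
    ultimately show "x1 = x2 \<and> y1 = y2" using h(5) by simp
  qed
  have img: "(\<lambda>(x,y). x * y) ` (?D a \<times> ?D b) = ?D (a*b)"
  proof
    show "(\<lambda>(x,y). x * y) ` (?D a \<times> ?D b) \<subseteq> ?D (a*b)" by (auto intro: mult_dvd_mono)
    show "?D (a*b) \<subseteq> (\<lambda>(x,y). x * y) ` (?D a \<times> ?D b)"
    proof
      fix d assume "d \<in> ?D (a*b)"
      then obtain x y where "d = x * y" "x dvd a" "y dvd b" using division_decomp by blast
      thus "d \<in> (\<lambda>(x,y). x * y) ` (?D a \<times> ?D b)" by force
    qed
  qed
  have "divisor_sigma (a*b) = (\<Sum>d\<in>(\<lambda>(x,y). x * y) ` (?D a \<times> ?D b). d)"
    unfolding divisor_sigma_def img ..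
  also have "\<dots> = (\<Sum>z\<in>?D a \<times> ?D b. (\<lambda>(x,y). x * y) z)"
    by (rule sum.reindex[OF inj, unfolded comp_def])
  also have "\<dots> = (\<Sum>x\<in>?D a. \<Sum>y\<in>?D b. x * y)"
    by (simp add: sum.cartesian_product)
  also have "\<dots> = divisor_sigma a * divisor_sigma b"
    unfolding divisor_sigma_def by (simp add: sum_product)
  finally show ?thesis .
qed

lemma sigma_one [simp]: "divisor_sigma 1 = 1"
  unfolding divisor_sigma_def by simp

lemma sigma_pp:
  assumes "prime (p::nat)"
  shows "divisor_sigma (p ^ a) = (\<Sum>i\<le>a. p ^ i)"
proof -
  have "{d. d dvd p ^ a} = (\<lambda>i. p ^ i) ` {..a}"
    using divides_primepow_nat[OF assms] by auto
  moreover have "inj_on (\<lambda>i. p ^ i) {..a}"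
    using prime_gt_1_nat[OF assms] by (auto intro!: inj_onI simp: power_inject_exp)
  ultimately show ?thesis unfolding divisor_sigma_def by (simp add: sum.reindex)
qed

lemma sigma_pp_Suc:
  assumes "prime (p::nat)"
  shows "divisor_sigma (p ^ Suc a) = p * divisor_sigma (p ^ a) + 1"
proof -
  have "(\<Sum>i\<le>Suc a. p ^ i) = p ^ 0 + (\<Sum>i\<le>a. p ^ Suc i)" by (rule sum.atMost_Suc_shift)
  also have "\<dots> = p * (\<Sum>i\<le>a. p ^ i) + 1" by (simp add: sum_distrib_left)
  finally show ?thesis unfolding sigma_pp[OF assms] .
qed

lemma sigma_pp_le:
  assumes "prime (p::nat)"
  shows "divisor_sigma (p ^ a) + 1 \<le> p ^ Suc a"
proof (induction a)
  case 0
  then show ?case using prime_ge_2_nat[OF assms] sigma_one by simp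
next
  case (Suc a)
  have "divisor_sigma (p ^ Suc a) + 1 = p * divisor_sigma (p ^ a) + 2"
    using sigma_pp_Suc[OF assms, of a] by linarith
  also have "\<dots> \<le> p * (divisor_sigma (p ^ a) + 1)" using prime_ge_2_nat[OF assms] by simp
  also have "\<dots> \<le> p * p ^ Suc a" using Suc by (intro mult_le_mono2) simp
  finally show ?case by simp
qed

lemma sigma_pp_mono:
  assumes "prime (p::nat)" "prime q" "p \<le> q"
  shows "divisor_sigma (p ^ a) \<le> divisor_sigma (q ^ a)"
  unfolding sigma_pp[OF assms(1)] sigma_pp[OF assms(2)]
  by (intro sum_mono power_mono) (use assms in auto)

lemma sigma_pp_strict:
  assumes "prime (p::nat)" "a < b"
  shows "divisor_sigma (p ^ a) < divisor_sigma (p ^ b)"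
  using assms(2)
proof (induction b)
  case 0 then show ?case by simp
next
  case (Suc b)
  have "divisor_sigma (p ^ b) < divisor_sigma (p ^ Suc b)"
    using prime_ge_2_nat[OF assms(1)] sigma_pp_Suc[OF assms(1), of b]
  proof -
    have "divisor_sigma (p ^ b) \<le> p * divisor_sigma (p ^ b)" using prime_gt_0_nat[OF assms(1)] by simp
    thus ?thesis using sigma_pp_Suc[OF assms(1), of b] by linarith
  qed
  then show ?case using Suc by (cases "a = b") auto
qed


definition g :: "real \<Rightarrow> nat \<Rightarrow> real" where
  "g e k = real (divisor_sigma k) / real k powr (1 + e)"

definition maxat :: "real \<Rightarrow> nat \<Rightarrow> bool" where
  "maxat e m \<longleftrightarrow> 0 < m \<and> (\<forall>k>0. g e k \<le> g e m)"

definition hh :: "real \<Rightarrow> nat \<Rightarrow> nat \<Rightarrow> real" where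
  "hh e p b = real (divisor_sigma (p ^ b)) / real p powr (real b * (1 + e))"

definition R :: "real \<Rightarrow> nat \<Rightarrow> nat \<Rightarrow> real" where
  "R e p b = real (divisor_sigma (p ^ Suc b)) / (real (divisor_sigma (p ^ b)) * real p powr (1 + e))"

lemma CA_iff: "colossally_abundant m \<longleftrightarrow> (\<exists>e>0. maxat e m)"
  unfolding colossally_abundant_def maxat_def g_def by auto

lemma sigma_gt0: "k > 0 \<Longrightarrow> divisor_sigma k > 0"
  using sigma_pos[of k] by linarith

lemma g_pos: "k > 0 \<Longrightarrow> g e k > 0"
  unfolding g_def using sigma_gt0[of k] by auto

lemma hh_pos: "prime p \<Longrightarrow> hh e p b > 0"
  unfolding hh_def using sigma_gt0[of "p^b"] prime_gt_0_nat[of p] by auto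

lemma g_factor:
  assumes "prime p" "\<not> p dvd m" "m > 0"
  shows "g e (p ^ b * m) = hh e p b * g e m"
proof -
  have cop: "coprime (p ^ b) m"
    using assms by (simp add: prime_imp_coprime coprime_power_left_iff)
  have s: "divisor_sigma (p ^ b * m) = divisor_sigma (p ^ b) * divisor_sigma m"
    using sigma_mult[OF cop] assms prime_gt_0_nat[OF assms(1)] by simp
  have p0: "real p > 0" using prime_gt_0_nat[OF assms(1)] by simp
  have pw: "real (p ^ b) powr (1 + e) = real p powr (real b * (1 + e))"
    using p0 by (simp add: powr_realpow[symmetric] powr_powr)
  have "real (p ^ b * m) powr (1 + e) = real (p ^ b) powr (1 + e) * real m powr (1 + e)"
    by (simp add: powr_mult)
  thus ?thesis unfolding g_def hh_def s pw by simp
qed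

lemma local_max:
  assumes "maxat e M" "prime p" "M = p ^ a * m" "\<not> p dvd m"
  shows "hh e p b \<le> hh e p a"
proof -
  have m0: "m > 0" using assms(1,3) unfolding maxat_def by (cases m) auto
  have "g e (p ^ b * m) \<le> g e M"
    using assms(1) prime_gt_0_nat[OF assms(2)] m0 unfolding maxat_def by simp
  hence "hh e p b * g e m \<le> hh e p a * g e m"
    using g_factor[OF assms(2,4) m0] assms(3) by simp
  thus ?thesis using g_pos[OF m0, of e] by simp
qed

lemma hh_Suc:
  assumes "prime p"
  shows "hh e p (Suc b) = hh e p b * R e p b"
proof -
  have p0: "real p > 0" using prime_gt_0_nat[OF assms(1)] by simp
  have s0: "real (divisor_sigma (p ^ b)) > 0" using sigma_gt0[of "p^b"] p0 by simp
  have "real p powr (real (Suc b) * (1 + e)) = real p powr (real b * (1 + e)) * real p powr (1 + e)"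
    by (simp add: powr_add[symmetric] algebra_simps)
  thus ?thesis unfolding hh_def R_def using s0 by (simp add: field_simps)
qed

lemma R_alt:
  assumes "prime p"
  shows "R e p b = (real p + 1 / real (divisor_sigma (p ^ b))) / (real p * real p powr e)"
proof -
  have p0: "real p > 0" using prime_gt_0_nat[OF assms(1)] by simp
  have s0: "real (divisor_sigma (p ^ b)) > 0" using sigma_gt0[of "p^b"] p0 by simp
  have X: "real p powr (1 + e) = real p * real p powr e" using p0 by (simp add: powr_add)
  have "real (divisor_sigma (p ^ Suc b)) = real p * real (divisor_sigma (p ^ b)) + 1"
    using sigma_pp_Suc[OF assms] by simp
  thus ?thesis unfolding R_def X using s0 by (simp add: field_simps)
qed

lemma R_strict:
  assumes "prime p" "b < c"
  shows "R e p c < R e p b"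
proof -
  have p0: "real p > 0" using prime_gt_0_nat[OF assms(1)] by simp
  have s0: "real (divisor_sigma (p ^ b)) > 0" using sigma_gt0[of "p^b"] p0 by simp
  have "real (divisor_sigma (p ^ b)) < real (divisor_sigma (p ^ c))"
    using sigma_pp_strict[OF assms] by simp
  hence "1 / real (divisor_sigma (p ^ c)) < 1 / real (divisor_sigma (p ^ b))"
    using s0 by (simp add: frac_less2)
  moreover have "real p * real p powr e > 0" using p0 by simp
  ultimately show ?thesis unfolding R_alt[OF assms(1)] by (simp add: divide_strict_right_mono)
qed

lemma two_max:
  assumes "prime p" "\<And>c. hh e p c \<le> hh e p a" "\<And>c. hh e p c \<le> hh e p b" "a < b"
  shows "b = Suc a \<and> R e p a = 1"
proof -
  have Ra: "R e p a \<le> 1"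
    using assms(2)[of "Suc a"] hh_Suc[OF assms(1), of e a] hh_pos[OF assms(1), of e a]
    by (simp add: mult_le_cancel_left1)
  have dec: "hh e p (Suc a + Suc d) < hh e p (Suc a)" for d
  proof (induction d)
    case 0
    have "R e p (Suc a) < 1" using R_strict[OF assms(1), of a "Suc a" e] Ra by simp
    thus ?case using hh_Suc[OF assms(1), of e "Suc a"] hh_pos[OF assms(1), of e "Suc a"]
      by (simp add: mult_less_cancel_left1)
  next
    case (Suc d)
    have "R e p (Suc a + Suc d) < 1" using R_strict[OF assms(1), of a "Suc a + Suc d" e] Ra by simp
    hence "hh e p (Suc (Suc a + Suc d)) < hh e p (Suc a + Suc d)"
      using hh_Suc[OF assms(1), of e "Suc a + Suc d"] hh_pos[OF assms(1), of e "Suc a + Suc d"]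
      by (simp add: mult_less_cancel_left1)
    thus ?case using Suc by simp
  qed
  have b: "b = Suc a"
  proof (rule ccontr)
    assume "b \<noteq> Suc a"
    then obtain d where "b = Suc a + Suc d" using assms(4) by (metis add_Suc_right less_imp_Suc_add Suc_lessI)
    hence "hh e p b < hh e p (Suc a)" using dec by simp
    also have "\<dots> \<le> hh e p a" by (rule assms(2))
    also have "\<dots> \<le> hh e p b" by (rule assms(3))
    finally show False by simp
  qed
  have "hh e p (Suc a) = hh e p a" using assms(2)[of "Suc a"] assms(3)[of a] b by simp
  hence "R e p a = 1" using hh_Suc[OF assms(1), of e a] hh_pos[OF assms(1), of e a] by simp
  with b show ?thesis by simp
qed

lemma crit_eq:
  assumes "prime p" "R e p a = 1"
  shows "real p powr e = 1 + 1 / (real p * real (divisor_sigma (p ^ a)))"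
proof -
  have p0: "real p > 0" using prime_gt_0_nat[OF assms(1)] by simp
  have s0: "real (divisor_sigma (p ^ a)) > 0" using sigma_gt0[of "p^a"] p0 by simp
  have "real p + 1 / real (divisor_sigma (p ^ a)) = real p * real p powr e"
    using assms(2) unfolding R_alt[OF assms(1)] using p0 by (simp add: divide_eq_1_iff)
  thus ?thesis using p0 s0 by (simp add: field_simps)
qed

lemma crit_bound:
  assumes "e > 0" "prime p" "R e p a = 1"
  shows "real (Suc a) * ln (real p) \<le> - ln e - ln (ln 2)"
proof -
  let ?s = "real (divisor_sigma (p ^ a))"
  have p2: "real p \<ge> 2" using prime_ge_2_nat[OF assms(2)] by simp
  have lp: "ln (real p) \<ge> ln 2" using p2 by simp
  have lp0: "ln 2 > (0::real)" by simp
  have s1: "?s \<ge> real p ^ a" using sigma_pos[of "p^a"] prime_gt_0_nat[OF assms(2)]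
    by (metis of_nat_le_iff of_nat_power zero_less_power)
  have "e * ln (real p) = ln (real p powr e)" using p2 by (simp add: ln_powr)
  also have "\<dots> = ln (1 + 1 / (real p * ?s))" using crit_eq[OF assms(2,3)] by simp
  also have "\<dots> \<le> 1 / (real p * ?s)" by (rule ln_add_one_self_le_self) simp
  also have "\<dots> \<le> 1 / real p ^ Suc a"
    using s1 p2 sigma_gt0[of "p^a"] prime_gt_0_nat[OF assms(2)]
    by (intro divide_left_mono mult_pos_pos) (auto intro: mult_left_mono)
  finally have h: "e * ln (real p) * real p ^ Suc a \<le> 1" using p2 by (simp add: field_simps)
  have pos: "e * ln (real p) * real p ^ Suc a > 0" using assms(1) p2 lp lp0 by simp
  have "ln (e * ln (real p) * real p ^ Suc a) \<le> 0" using h pos by simp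
  moreover have "ln (e * ln (real p) * real p ^ Suc a) = ln e + ln (ln (real p)) + real (Suc a) * ln (real p)"
    using assms(1) p2 lp lp0 by (simp add: ln_mult ln_realpow algebra_simps)
  moreover have "ln (ln (real p)) \<ge> ln (ln 2)"
  proof -
    have "ln (real p) > 0" using lp lp0 by linarith
    hence h: "ln (ln 2) \<le> ln (ln (real p)) \<longleftrightarrow> ln 2 \<le> ln (real p)"
      by (intro ln_le_cancel_iff) (use lp0 in auto)
    show ?thesis using h lp by blast
  qed
  ultimately show ?thesis by linarith
qed

lemma crit_unique_lt:
  assumes "e > 0" "prime p" "prime q" "R e p a = 1" "R e q a = 1" "p < q"
  shows False
proof -
  have p2: "real p \<ge> 2" using prime_ge_2_nat[OF assms(2)] by simp
  have "real p powr e < real q powr e" using assms(1,6) p2 by (simp add: powr_less_mono2)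
  moreover have "p * divisor_sigma (p ^ a) \<le> q * divisor_sigma (q ^ a)"
    using sigma_pp_mono[OF assms(2,3), of a] assms(6) by (intro mult_mono) auto
  hence "real p * real (divisor_sigma (p ^ a)) \<le> real q * real (divisor_sigma (q ^ a))"
    by (metis of_nat_le_iff of_nat_mult)
  hence "1 / (real q * real (divisor_sigma (q ^ a))) \<le> 1 / (real p * real (divisor_sigma (p ^ a)))"
  proof (rule divide_left_mono)
    show "0 < real q * real (divisor_sigma (q ^ a)) * (real p * real (divisor_sigma (p ^ a)))"
      using sigma_gt0[of "p^a"] prime_gt_0_nat[OF assms(2)] sigma_gt0[of "q^a"] prime_gt_0_nat[OF assms(3)]
      by simp
  qed (use \<open>real p * _ \<le> _\<close> in auto)
  ultimately show False using crit_eq[OF assms(2,4)] crit_eq[OF assms(3,5)] by simp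
qed

lemma crit_unique:
  assumes "e > 0" "prime p" "prime q" "R e p a = 1" "R e q a = 1"
  shows "p = q"
  using crit_unique_lt[OF assms] crit_unique_lt[OF assms(1,3,2,5,4)] by (metis linorder_neqE_nat)

lemma lowD:
  assumes "e > 0" "prime p" "R e p a \<le> 1"
  shows "- ln e \<le> real (a + 3) * ln (real p)"
proof -
  let ?s = "real (divisor_sigma (p ^ a))"
  let ?y = "1 / real p ^ (a + 2)"
  have p2: "real p \<ge> 2" using prime_ge_2_nat[OF assms(2)] by simp
  have lp: "ln (real p) \<ge> ln 2" using p2 by simp
  have lp0: "ln 2 > (0::real)" by simp
  have s0: "?s > 0" using sigma_gt0[of "p^a"] prime_gt_0_nat[OF assms(2)] by simp
  have s1: "?s \<le> real p ^ Suc a" using sigma_pp_le[OF assms(2), of a]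
    by (metis Suc_leD Suc_eq_plus1 of_nat_le_iff of_nat_power)
  have "real p * real p powr e > 0" using p2 by simp
  hence "real p + 1 / ?s \<le> real p * real p powr e"
    using assms(3) unfolding R_alt[OF assms(2)] by (auto simp: divide_le_eq_1)
  hence pe: "1 + 1 / (real p * ?s) \<le> real p powr e" using p2 s0 by (simp add: field_simps)
  have "real p * ?s \<le> real p ^ (a+2)" using s1 p2 by (simp add: mult_left_mono)
  hence "?y \<le> 1 / (real p * ?s)" using s0 p2 by (intro divide_left_mono) auto
  hence y1: "1 + ?y \<le> real p powr e" using pe by linarith
  have ypos: "?y > 0" using p2 by simp
  have "real p ^ (a + 2) \<ge> 2 ^ (a+2)" using p2 by (intro power_mono) auto
  moreover have "(2::real) ^ (a+2) \<ge> 2"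
  proof -
    have "(1::real) \<le> 2 ^ a" by simp
    moreover have "(2::real)^(a+2) = 4 * 2^a" by (simp add: power_add)
    ultimately show ?thesis by linarith
  qed
  ultimately have X2: "real p ^ (a + 2) \<ge> 2" by linarith
  have yle: "?y \<le> 1/2" by (rule divide_left_mono) (use X2 in linarith, simp, use X2 in linarith)
  have gen: "y/2 \<le> y - y^2" if "0 < y" "y \<le> 1/2" for y :: real
  proof -
    have "0 \<le> y * (1/2 - y)" using that by simp
    thus ?thesis by (simp add: power2_eq_square algebra_simps)
  qed
  have "?y / 2 \<le> ?y - ?y^2" by (rule gen[OF ypos yle])
  also have "\<dots> \<le> ln (1 + ?y)" using yle ypos by (intro ln_one_plus_pos_lower_bound) auto
  also have "\<dots> \<le> ln (real p powr e)"
    by (rule iffD2[OF ln_le_cancel_iff]) (use ypos in linarith, use p2 in simp, use y1 in linarith)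
  also have "\<dots> = e * ln (real p)" using p2 by (simp add: ln_powr)
  finally have h: "1 \<le> 2 * e * ln (real p) * real p ^ (a + 2)" using p2 by (simp add: field_simps)
  have "ln (2 * e * ln (real p) * real p ^ (a + 2)) \<ge> 0" using h by simp
  moreover have "ln (2 * e * ln (real p) * real p ^ (a + 2)) = ln 2 + ln e + ln (ln (real p)) + real (a+2) * ln (real p)"
    using assms(1) p2 lp lp0 by (simp add: ln_mult ln_realpow algebra_simps)
  moreover have "ln (ln (real p)) \<le> ln (real p) - 1" using lp lp0 by (intro ln_le_minus_one) linarith
  moreover have "ln 2 < (1::real)" by (rule ln_2_less_1)
  ultimately show ?thesis by (simp add: algebra_simps)
qed

lemma prod_mult_dvd:
  assumes "M > (0::nat)" "finite P" "\<And>p. p \<in> P \<Longrightarrow> prime p"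
  shows "(\<Prod>p\<in>P. p ^ multiplicity p M) dvd M"
proof (rule multiplicity_le_imp_dvd)
  have "(\<Prod>p\<in>P. p ^ multiplicity p M) > 0" by (rule prod_pos) (use assms(3) prime_gt_0_nat in auto)
  thus "(\<Prod>p\<in>P. p ^ multiplicity p M) \<noteq> 0" by simp
  fix q :: nat assume "prime q"
  show "multiplicity q (\<Prod>p\<in>P. p ^ multiplicity p M) \<le> multiplicity q M"
    by (subst multiplicity_prod_prime_powers) (use assms \<open>prime q\<close> in auto)
qed

lemma sum_mult_ln_le:
  assumes "M > (0::nat)" "finite P" "\<And>p. p \<in> P \<Longrightarrow> prime p"
  shows "(\<Sum>p\<in>P. real (multiplicity p M) * ln (real p)) \<le> ln (real M)"
proof -
  have pos: "(\<Prod>p\<in>P. p ^ multiplicity p M) > 0" by (rule prod_pos) (use assms(3) prime_gt_0_nat in auto)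
  have "(\<Prod>p\<in>P. p ^ multiplicity p M) \<le> M" using dvd_imp_le[OF prod_mult_dvd[OF assms] assms(1)] .
  hence le: "real (\<Prod>p\<in>P. p ^ multiplicity p M) \<le> real M" by linarith
  have "ln (real (\<Prod>p\<in>P. p ^ multiplicity p M)) = ln (\<Prod>p\<in>P. real p ^ multiplicity p M)" by simp
  also have "\<dots> = (\<Sum>p\<in>P. ln (real p ^ multiplicity p M))"
    using assms(2,3) by (intro ln_prod) (auto simp: prime_gt_0_nat)
  also have "\<dots> = (\<Sum>p\<in>P. real (multiplicity p M) * ln (real p))"
    using assms(3) by (intro sum.cong refl) (auto simp: ln_realpow prime_gt_0_nat)
  finally have eq: "ln (real (\<Prod>p\<in>P. p ^ multiplicity p M)) = (\<Sum>p\<in>P. real (multiplicity p M) * ln (real p))" .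
  have "ln (real (\<Prod>p\<in>P. p ^ multiplicity p M)) \<le> ln (real M)"
  proof (rule ln_mono)
    show "0 < real (\<Prod>p\<in>P. p ^ multiplicity p M)" using pos by (simp only: of_nat_0_less_iff)
  qed (rule le)
  thus ?thesis using eq by linarith
qed

lemma local_max_mult:
  assumes "maxat e M" "prime p"
  shows "hh e p c \<le> hh e p (multiplicity p M)"
proof -
  have "M \<noteq> 0" using assms(1) unfolding maxat_def by simp
  moreover have "\<not> is_unit p" using assms(2) not_prime_unit by blast
  ultimately obtain m where "M = p ^ multiplicity p M * m" "\<not> p dvd m" by (rule multiplicity_decompose')
  thus ?thesis using local_max[OF assms] by blast
qed

lemma lowD_M:
  assumes "maxat e M" "e > 0" "finite P" "\<And>p. p \<in> P \<Longrightarrow> prime p"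
  shows "(\<Sum>q\<in>P. - ln e - 3 * ln (real q)) \<le> ln (real M)"
proof -
  have M0: "M > 0" using assms(1) unfolding maxat_def by simp
  have "- ln e - 3 * ln (real q) \<le> real (multiplicity q M) * ln (real q)" if q: "q \<in> P" for q
  proof -
    have pq: "prime q" using assms(4) q .
    let ?a = "multiplicity q M"
    have "hh e q (Suc ?a) \<le> hh e q ?a" by (rule local_max_mult[OF assms(1) pq])
    hence "R e q ?a \<le> 1" using hh_Suc[OF pq, of e ?a] hh_pos[OF pq, of e ?a]
      by (simp add: mult_le_cancel_left1)
    from lowD[OF assms(2) pq this] show ?thesis by (simp add: algebra_simps)
  qed
  hence "(\<Sum>q\<in>P. - ln e - 3 * ln (real q)) \<le> (\<Sum>q\<in>P. real (multiplicity q M) * ln (real q))"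
    by (rule sum_mono)
  also have "\<dots> \<le> ln (real M)" by (rule sum_mult_ln_le[OF M0 assms(3,4)])
  finally show ?thesis .
qed

definition kappa :: real where "kappa = - ln (ln 2)"

lemma pair_bound:
  assumes "maxat e M" "maxat e N" "e > 0" "A > (0::nat)"
  shows "ln (real N) \<le> ln (real M) + real A * max 0 (- ln e + kappa) + ln (real M) / real A"
proof -
  have M0: "M > 0" and N0: "N > 0" using assms(1,2) unfolding maxat_def by auto
  define T where "T = max 0 (- ln e + kappa)"
  define S where "S = {p. prime p \<and> multiplicity p M < multiplicity p N}"
  have Ssub: "S \<subseteq> {..N}"
  proof
    fix p assume "p \<in> S"
    hence m: "multiplicity p N \<noteq> 0" unfolding S_def by simp
    have "p dvd N"
    proof (rule ccontr)
      assume "\<not> p dvd N"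
      hence "multiplicity p N = 0" by (rule not_dvd_imp_multiplicity_0)
      with m show False by simp
    qed
    hence "p \<le> N" using N0 by (rule dvd_imp_le)
    thus "p \<in> {..N}" by simp
  qed
  have finS: "finite S" by (rule finite_subset[OF Ssub]) simp
  have primeS: "\<And>p. p \<in> S \<Longrightarrow> prime p" unfolding S_def by auto
  have crit: "multiplicity p N = Suc (multiplicity p M) \<and> R e p (multiplicity p M) = 1" if "p \<in> S" for p
  proof -
    have pp: "prime p" using that primeS by blast
    show ?thesis
      by (rule two_max[OF pp local_max_mult[OF assms(1) pp] local_max_mult[OF assms(2) pp]])
         (use that in \<open>auto simp: S_def\<close>)
  qed
  have Sbound: "ln (real p) \<le> T" if "p \<in> S" for p
  proof -
    have pp: "prime p" using that primeS by blast
    have "real (Suc (multiplicity p M)) * ln (real p) \<le> - ln e + kappa"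
      using crit_bound[OF assms(3) pp] crit[OF that] unfolding kappa_def by simp
    moreover have "real (Suc (multiplicity p M)) * ln (real p) = ln (real p) + real (multiplicity p M) * ln (real p)"
      by (simp add: algebra_simps)
    moreover have "0 \<le> real (multiplicity p M) * ln (real p)"
      using prime_ge_2_nat[OF pp] by simp
    ultimately show ?thesis unfolding T_def by linarith
  qed
  have P0: "(\<Prod>p\<in>S. p) > 0" by (rule prod_pos) (use primeS prime_gt_0_nat in auto)
  have dvd: "N dvd M * (\<Prod>p\<in>S. p)"
  proof (rule multiplicity_le_imp_dvd)
    show "N \<noteq> 0" using N0 by simp
    fix q :: nat assume q: "prime q"
    have mp: "multiplicity q (\<Prod>p\<in>S. p) = (if q \<in> S then 1 else 0)"
      using multiplicity_prod_prime_powers[OF finS primeS q, of "\<lambda>_. 1"] by simp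
    have md: "multiplicity q (M * (\<Prod>p\<in>S. p)) = multiplicity q M + multiplicity q (\<Prod>p\<in>S. p)"
      by (rule prime_elem_multiplicity_mult_distrib) (use q M0 P0 in auto)
    show "multiplicity q N \<le> multiplicity q (M * (\<Prod>p\<in>S. p))"
    proof (cases "q \<in> S")
      case True
      then show ?thesis using crit[OF True] md mp by simp
    next
      case False
      then show ?thesis using q md mp unfolding S_def by auto
    qed
  qed
  have "N \<le> M * (\<Prod>p\<in>S. p)" using dvd_imp_le[OF dvd] M0 P0 by simp
  hence "real N \<le> real (M * (\<Prod>p\<in>S. p))" by (simp only: of_nat_le_iff)
  also have "real (M * (\<Prod>p\<in>S. p)) = real M * (\<Prod>p\<in>S. real p)" by simp
  finally have "real N \<le> real M * (\<Prod>p\<in>S. real p)" .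
  hence "ln (real N) \<le> ln (real M * (\<Prod>p\<in>S. real p))"
    using N0 by simp
  also have "\<dots> = ln (real M) + (\<Sum>p\<in>S. ln (real p))"
  proof -
    have z: "0 \<notin> S" using primeS not_prime_0 by blast
    have "(\<Prod>p\<in>S. real p) > 0" by (rule prod_pos) (use primeS prime_gt_0_nat in auto)
    hence "ln (real M * (\<Prod>p\<in>S. real p)) = ln (real M) + ln (\<Prod>p\<in>S. real p)"
      using M0 by (simp add: ln_mult)
    also have "ln (\<Prod>p\<in>S. real p) = (\<Sum>p\<in>S. ln (real p))"
      by (rule ln_prod[OF finS]) (use primeS prime_gt_0_nat in force)
    finally show ?thesis .
  qed
  finally have L1: "ln (real N) \<le> ln (real M) + (\<Sum>p\<in>S. ln (real p))" .
  define S1 where "S1 = {p\<in>S. multiplicity p M < A}"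
  define S2 where "S2 = {p\<in>S. \<not> multiplicity p M < A}"
  have SU: "S = S1 \<union> S2" and SD: "S1 \<inter> S2 = {}" unfolding S1_def S2_def by auto
  have fin1: "finite S1" and fin2: "finite S2" using finS unfolding S1_def S2_def by auto
  have inj: "inj_on (\<lambda>p. multiplicity p M) S1"
  proof (rule inj_onI)
    fix p q assume "p \<in> S1" "q \<in> S1" "multiplicity p M = multiplicity q M"
    thus "p = q" using crit[of p] crit[of q] crit_unique[OF assms(3), of p q "multiplicity p M"] primeS
      unfolding S1_def by auto
  qed
  have "card S1 \<le> card {..<A}"
    by (rule card_inj_on_le[OF inj]) (auto simp: S1_def)
  hence cS1: "card S1 \<le> A" by simp
  have T0: "T \<ge> 0" unfolding T_def by simp
  have "(\<Sum>p\<in>S1. ln (real p)) \<le> real (card S1) * T"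
    by (rule sum_bounded_above) (use Sbound in \<open>auto simp: S1_def\<close>)
  also have "\<dots> \<le> real A * T" using cS1 T0 by (simp add: mult_right_mono)
  finally have B1: "(\<Sum>p\<in>S1. ln (real p)) \<le> real A * T" .
  have "(\<Sum>p\<in>S2. ln (real p)) \<le> (\<Sum>p\<in>S2. real (multiplicity p M) * ln (real p) / real A)"
  proof (rule sum_mono)
    fix p assume p: "p \<in> S2"
    hence pp: "prime p" and Am: "A \<le> multiplicity p M" using primeS unfolding S2_def by auto
    have lp: "ln (real p) \<ge> 0" using prime_ge_2_nat[OF pp] by simp
    have "real A * ln (real p) \<le> real (multiplicity p M) * ln (real p)"
      using Am lp by (intro mult_right_mono) auto
    thus "ln (real p) \<le> real (multiplicity p M) * ln (real p) / real A"
      using assms(4) by (simp add: field_simps)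
  qed
  also have "\<dots> = (\<Sum>p\<in>S2. real (multiplicity p M) * ln (real p)) / real A"
    by (simp add: sum_divide_distrib)
  also have "\<dots> \<le> ln (real M) / real A"
    using sum_mult_ln_le[OF M0 fin2] primeS assms(4) unfolding S2_def
    by (intro divide_right_mono) auto
  finally have B2: "(\<Sum>p\<in>S2. ln (real p)) \<le> ln (real M) / real A" .
  have "(\<Sum>p\<in>S. ln (real p)) = (\<Sum>p\<in>S1. ln (real p)) + (\<Sum>p\<in>S2. ln (real p))"
    unfolding SU by (rule sum.union_disjoint[OF fin1 fin2 SD])
  thus ?thesis using L1 B1 B2 unfolding T_def by linarith
qed

lemma sigma_le_harm:
  assumes "k > 0"
  shows "real (divisor_sigma k) \<le> real k * harm k"
proof -
  let ?D = "{d. d dvd k}"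
  have fin: "finite ?D" using assms by (simp add: finite_divisors_nat)
  have "divisor_sigma k = (\<Sum>d\<in>?D. k div d)"
    unfolding divisor_sigma_def
    by (rule sum.reindex_bij_witness[of _ "\<lambda>d. k div d" "\<lambda>d. k div d"])
       (use assms in \<open>auto simp: div_div_eq_right dvd_div_eq_mult elim!: dvdE\<close>)
  hence "real (divisor_sigma k) = (\<Sum>d\<in>?D. real k / real d)"
    by (simp add: real_of_nat_div)
  also have "\<dots> \<le> (\<Sum>d\<in>{1..k}. real k / real d)"
  proof (rule sum_mono2)
    show "?D \<subseteq> {1..k}"
    proof
      fix d assume "d \<in> ?D"
      hence "d dvd k" by simp
      hence "d \<le> k" "d \<noteq> 0" using assms dvd_imp_le by auto
      thus "d \<in> {1..k}" by simp
    qed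
  qed auto
  also have "\<dots> = real k * harm k"
    unfolding harm_def by (simp add: sum_distrib_left divide_inverse)
  finally show ?thesis .
qed

lemma harm_le_ln: "k > 0 \<Longrightarrow> harm k \<le> 1 + ln (real k)"
  using euler_mascheroni_sequence_decreasing[of 1 k] by (simp add: harm_def)

lemma g_le:
  assumes "k > 0"
  shows "g e k \<le> (1 + ln (real k)) / real k powr e"
proof -
  have k0: "real k > 0" using assms by simp
  have "real (divisor_sigma k) \<le> real k * (1 + ln (real k))"
    using sigma_le_harm[OF assms] harm_le_ln[OF assms] k0
    by (meson mult_left_mono order_trans less_imp_le)
  moreover have "real k powr (1 + e) = real k * real k powr e" using k0 by (simp add: powr_add)
  ultimately show ?thesis unfolding g_def using k0
    by (simp add: divide_right_mono field_simps)
qed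

lemma exists_max:
  assumes "e > 0"
  shows "\<exists>K. maxat e K"
proof -
  have lim: "(\<lambda>k::nat. (1 + ln (real k)) / real k powr e) \<longlonglongrightarrow> 0"
    using assms by real_asymp
  hence "eventually (\<lambda>k. (1 + ln (real k)) / real k powr e < 1) sequentially"
    by (rule order_tendstoD) simp
  then obtain K0 where K0: "\<And>k. k \<ge> K0 \<Longrightarrow> (1 + ln (real k)) / real k powr e < 1"
    unfolding eventually_sequentially by blast
  define F where "F = {1..max 1 K0}"
  have finF: "finite F" and neF: "F \<noteq> {}" unfolding F_def by auto
  have "Max (g e ` F) \<in> g e ` F" using finF neF by (intro Max_in) auto
  then obtain K where KF: "K \<in> F" and KM: "g e K = Max (g e ` F)" by auto
  have Kmax: "g e k \<le> g e K" if "k \<in> F" for k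
    unfolding KM using finF that by (intro Max_ge) auto
  have "maxat e K"
    unfolding maxat_def
  proof (intro conjI allI impI)
    show "0 < K" using KF unfolding F_def by auto
    fix k :: nat assume k: "0 < k"
    show "g e k \<le> g e K"
    proof (cases "k \<in> F")
      case True thus ?thesis by (rule Kmax)
    next
      case False
      hence "k \<ge> K0" using k unfolding F_def by auto
      hence "g e k < 1" using g_le[OF k, of e] K0[of k] by linarith
      also have "1 = g e 1" unfolding g_def using sigma_one by simp
      also have "\<dots> \<le> g e K" by (rule Kmax) (auto simp: F_def)
      finally show ?thesis by simp
    qed
  qed
  thus ?thesis by blast
qed

lemma ln_g: "k > 0 \<Longrightarrow> ln (g e k) = ln (real (divisor_sigma k)) - (1 + e) * ln (real k)"
  unfolding g_def using sigma_gt0[of k] by (simp add: ln_div ln_powr)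

lemma maxat_mono:
  assumes "maxat a X" "maxat b Y" "a < b"
  shows "Y \<le> X"
proof -
  have X0: "X > 0" and Y0: "Y > 0" using assms(1,2) unfolding maxat_def by auto
  have "g a Y \<le> g a X" using assms(1) Y0 unfolding maxat_def by auto
  hence h1: "ln (g a Y) \<le> ln (g a X)" using g_pos[OF X0] g_pos[OF Y0] by simp
  have "g b X \<le> g b Y" using assms(2) X0 unfolding maxat_def by auto
  hence h2: "ln (g b X) \<le> ln (g b Y)" using g_pos[OF X0] g_pos[OF Y0] by simp
  have "(b - a) * (ln (real Y) - ln (real X)) \<le> 0"
    using h1 h2 unfolding ln_g[OF X0] ln_g[OF Y0] by (simp add: algebra_simps)
  hence "ln (real Y) - ln (real X) \<le> 0" using assms(3) by (simp add: mult_le_0_iff)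
  hence "ln (real Y) \<le> ln (real X)" by simp
  thus ?thesis using X0 Y0 by simp
qed

lemma closed_EM: "closed {e. \<forall>k. 0 < k \<longrightarrow> g e k \<le> g e M}"
proof (rule closed_Collect_all)
  fix k :: nat
  show "closed {e. 0 < k \<longrightarrow> g e k \<le> g e M}"
  proof (cases "k = 0")
    case True thus ?thesis by simp
  next
    case False
    hence eq: "{e. 0 < k \<longrightarrow> g e k \<le> g e M} = {e. g e k \<le> g e M}" by simp
    show ?thesis unfolding eq
    proof (cases "M = 0")
      case True
      have z: "g e M = 0" for e unfolding g_def using True by simp
      show "closed {e. g e k \<le> g e M}" unfolding z unfolding g_def using False
        by (intro closed_Collect_le continuous_intros) auto
    next
      case False2: False
      thus "closed {e. g e k \<le> g e M}" unfolding g_def using False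
        by (intro closed_Collect_le continuous_intros) auto
    qed
  qed
qed

lemma maxat_iff_EM: "M > 0 \<Longrightarrow> maxat e M \<longleftrightarrow> e \<in> {e. \<forall>k. 0 < k \<longrightarrow> g e k \<le> g e M}"
  unfolding maxat_def by auto

lemma common_eps:
  assumes sm: "strict_mono n" and rng: "range n = {m. colossally_abundant m}"
  shows "\<exists>e>0. maxat e (n i) \<and> maxat e (n (Suc i))"
proof -
  define M where "M = n i"
  define N where "N = n (Suc i)"
  have MN: "M < N" unfolding M_def N_def using sm by (simp add: strict_mono_def)
  have "colossally_abundant M" using rng unfolding M_def by blast
  then obtain e2 where e2: "e2 > 0" "maxat e2 M" unfolding CA_iff by blast
  have "colossally_abundant N" using rng unfolding N_def by blast
  then obtain e1 where e1: "e1 > 0" "maxat e1 N" unfolding CA_iff by blast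
  have M0: "M > 0" and N0: "N > 0" using e1 e2 unfolding maxat_def by auto
  have e12: "e1 \<le> e2"
  proof (rule ccontr)
    assume "\<not> e1 \<le> e2"
    hence "N \<le> M" using maxat_mono[OF e2(2) e1(2)] by simp
    thus False using MN by simp
  qed
  define EM where "EM = {e. \<forall>k. 0 < k \<longrightarrow> g e k \<le> g e M}"
  define EN where "EN = {e. \<forall>k. 0 < k \<longrightarrow> g e k \<le> g e N}"
  have cM: "closed EM" and cN: "closed EN" unfolding EM_def EN_def by (rule closed_EM)+
  have cover: "{e1..e2} \<subseteq> EM \<union> EN"
  proof
    fix e assume e: "e \<in> {e1..e2}"
    show "e \<in> EM \<union> EN"
    proof (cases "e = e1 \<or> e = e2")
      case True
      thus ?thesis using e1 e2 maxat_iff_EM[OF M0] maxat_iff_EM[OF N0] unfolding EM_def EN_def by auto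
    next
      case False
      hence lt: "e1 < e" "e < e2" using e by auto
      have epos: "e > 0" using lt e1 by linarith
      obtain K where K: "maxat e K" using exists_max[OF epos] by blast
      have KN: "K \<le> N" by (rule maxat_mono[OF e1(2) K lt(1)])
      have MK: "M \<le> K" by (rule maxat_mono[OF K e2(2) lt(2)])
      have "colossally_abundant K" unfolding CA_iff using K epos by blast
      hence "K \<in> range n" using rng by blast
      then obtain j where j: "K = n j" by blast
      have "i \<le> j" using MK unfolding M_def j using sm by (simp add: strict_mono_less_eq)
      moreover have "j \<le> Suc i" using KN unfolding N_def j using sm by (simp add: strict_mono_less_eq)
      ultimately have "j = i \<or> j = Suc i" by linarith
      hence "K = M \<or> K = N" unfolding j M_def N_def by auto
      thus ?thesis using K maxat_iff_EM[OF M0] maxat_iff_EM[OF N0] unfolding EM_def EN_def by auto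
    qed
  qed
  have "EM \<inter> EN \<inter> {e1..e2} \<noteq> {}"
  proof
    assume "EM \<inter> EN \<inter> {e1..e2} = {}"
    from connected_closedD[OF connected_Icc this cover cM cN]
    have "EM \<inter> {e1..e2} = {} \<or> EN \<inter> {e1..e2} = {}" .
    moreover have "e2 \<in> EM \<inter> {e1..e2}" using e2 e12 maxat_iff_EM[OF M0] unfolding EM_def by auto
    moreover have "e1 \<in> EN \<inter> {e1..e2}" using e1 e12 maxat_iff_EM[OF N0] unfolding EN_def by auto
    ultimately show False by blast
  qed
  then obtain e where e: "e \<in> EM" "e \<in> EN" "e \<in> {e1..e2}" by blast
  have "e > 0" using e(3) e1(1) by simp
  moreover have "maxat e M" using e(1) maxat_iff_EM[OF M0] unfolding EM_def by auto
  moreover have "maxat e N" using e(2) maxat_iff_EM[OF N0] unfolding EN_def by auto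
  ultimately show ?thesis unfolding M_def N_def by blast
qed

lemma final_step:
  fixes L LN r A T :: real
  assumes L0: "L > 0" and LLN: "L \<le> LN" and pb: "LN \<le> L + A * T + L / A"
    and AT: "A * T \<le> L * r / 4" and A: "1 / A \<le> r / 4" and Apos: "A > 0" and r: "r > 0"
  shows "\<bar>L / LN - 1\<bar> < r"
proof -
  have "L / A = L * (1 / A)" by simp
  also have "\<dots> \<le> L * (r / 4)" using A L0 by (intro mult_left_mono) auto
  finally have "L / A \<le> L * r / 4" by simp
  hence LN2: "LN - L \<le> L * r / 2" using pb AT by linarith
  have LN0: "LN > 0" using L0 LLN by linarith
  have "L / LN \<le> 1" using LLN LN0 by simp
  hence "\<bar>L / LN - 1\<bar> = (LN - L) / LN" using LN0 by (simp add: field_simps)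
  also have "\<dots> \<le> (L * r / 2) / LN" using LN2 LN0 by (intro divide_right_mono) auto
  also have "\<dots> \<le> (L * r / 2) / L" using LLN L0 r by (intro divide_left_mono) auto
  also have "\<dots> = r / 2" using L0 by simp
  also have "\<dots> < r" using r by simp
  finally show ?thesis .
qed

theorem mainTheorem4:
  fixes n :: "nat \<Rightarrow> nat"
  assumes "strict_mono n"
    and "range n = {m. colossally_abundant m}"
  shows "(\<lambda>i. ln (real (n i)) / ln (real (n (Suc i)))) \<longlonglongrightarrow> 1"
proof (rule LIMSEQ_I)
  fix r :: real assume r: "0 < r"
  define r' where "r' = min r (1/2)"
  have r'pos: "r' > 0" and r'r: "r' \<le> r" using r unfolding r'_def by auto
  obtain A :: nat where A: "4 / r' < real A" using reals_Archimedean2 by blast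
  have "4 / r' > 0" using r'pos by simp
  hence Apos: "real A > 0" using A by linarith
  have Ainv: "1 / real A \<le> r' / 4"
    using A r'pos Apos by (simp add: field_simps)
  obtain C :: nat where C: "4 * real A / r' < real C" using reals_Archimedean2 by blast
  have "\<exists>B. finite B \<and> card B = Suc C \<and> B \<subseteq> {p::nat. prime p}"
    by (rule infinite_arbitrarily_large[OF primes_infinite])
  then obtain P where P2: "finite P" and P3: "card P = Suc C" and P1: "P \<subseteq> {p::nat. prime p}"
    by (elim exE conjE)
  have Pp: "\<And>p. p \<in> P \<Longrightarrow> prime p" using P1 by (simp add: subset_eq)
  define K where "K = (\<Sum>q\<in>P. 3 * ln (real q))"
  define Th where "Th = K + real C * \<bar>kappa\<bar>"
  define Tb where "Tb = max 0 (Th + kappa)"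
  define B where "B = 4 * real A * Tb / r'"
  obtain i0 :: nat where i0: "exp B < real i0" using reals_Archimedean2 by blast
  show "\<exists>no. \<forall>i\<ge>no. norm (ln (real (n i)) / ln (real (n (Suc i))) - 1) < r"
  proof (intro exI allI impI)
    fix i assume i: "i \<ge> max 2 i0"
    obtain e where e: "e > 0" "maxat e (n i)" "maxat e (n (Suc i))"
      using common_eps[OF assms] by blast
    define L where "L = ln (real (n i))"
    define LN where "LN = ln (real (n (Suc i)))"
    define t where "t = - ln e"
    define T where "T = max 0 (t + kappa)"
    have ni: "i \<le> n i" using seq_suble[OF assms(1)] .
    have i2: "real i \<ge> 2" using i by simp
    have ni2: "real (n i) \<ge> real i" using ni by simp
    have L0: "L > 0" unfolding L_def using i2 ni2 by simp
    have "exp B < real i" using i0 i by simp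
    hence "ln (exp B) < ln (real i)" using ln_less_cancel_iff[of "exp B" "real i"] i2 by simp
    hence "B < ln (real i)" by simp
    also have "ln (real i) \<le> L" unfolding L_def using i2 ni2 by simp
    finally have LB: "B < L" .
    have "n i < n (Suc i)" using assms(1) by (simp add: strict_mono_def)
    hence LLN: "L \<le> LN" unfolding L_def LN_def using i2 ni2 by simp
    have pb: "LN \<le> L + real A * T + L / real A"
      using pair_bound[OF e(2,3) e(1), of A] Apos unfolding L_def LN_def T_def t_def by simp
    have low: "(\<Sum>q\<in>P. t - 3 * ln (real q)) \<le> L"
      using lowD_M[OF e(2) e(1) P2 Pp] unfolding L_def t_def by simp
    have "(\<Sum>q\<in>P. t - 3 * ln (real q)) = real (Suc C) * t - K"
      unfolding K_def by (simp add: sum_subtractf P3)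
    hence low2: "real (Suc C) * t - K \<le> L" using low by simp
    have T0: "T \<ge> 0" unfolding T_def by simp
    have AT: "real A * T \<le> L * r' / 4"
    proof (cases "t \<ge> Th")
      case True
      have K0: "K \<ge> 0" unfolding K_def
      proof (intro sum_nonneg)
        fix q assume "q \<in> P"
        hence "q \<ge> 2" using Pp prime_ge_2_nat by blast
        thus "0 \<le> 3 * ln (real q)" by simp
      qed
      have "real C * (t + kappa) \<le> real C * t + real C * \<bar>kappa\<bar>"
        using mult_right_mono[OF abs_ge_self[of kappa], of "real C"] by (simp add: algebra_simps)
      also have "\<dots> \<le> real (Suc C) * t - K" using True unfolding Th_def by (simp add: algebra_simps)
      finally have "real C * (t + kappa) \<le> L" using low2 by linarith
      moreover have "t \<ge> 0" using True K0 unfolding Th_def by (smt (verit) mult_nonneg_nonneg of_nat_0_le_iff abs_ge_zero)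
      hence "real (Suc C) * t - K \<ge> 0 - K + t" by (simp add: algebra_simps)
      ultimately have CT: "real C * T \<le> L" using L0 unfolding T_def by (auto simp: max_def)
      have "4 * real A / r' * T \<le> real C * T" using C T0 by (intro mult_right_mono) auto
      hence "4 * real A / r' * T \<le> L" using CT by linarith
      hence "4 * real A * T \<le> L * r'" using r'pos by (simp add: field_simps)
      thus ?thesis by simp
    next
      case False
      hence "T \<le> Tb" unfolding T_def Tb_def by auto
      hence "real A * T \<le> real A * Tb" using Apos by (intro mult_left_mono) auto
      also have "real A * Tb = B * r' / 4" unfolding B_def using r'pos by simp
      also have "\<dots> \<le> L * r' / 4" using LB r'pos by (intro divide_right_mono mult_right_mono) auto
      finally show ?thesis .
    qed
    have "\<bar>L / LN - 1\<bar> < r'"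
      by (rule final_step[OF L0 LLN pb AT Ainv Apos r'pos])
    thus "norm (ln (real (n i)) / ln (real (n (Suc i))) - 1) < r"
      using r'r unfolding L_def LN_def by simp
  qed
qed

end
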